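(* Fix a set $A$, a set $V(A)$ of "objects", a binary relation $\trianglelefteq$ on objects, and a binary relation $\sqsubset$ on objects (with reflexive closure $\sqsubseteq$) satisfying: (i) if $x \trianglelefteq y$ and $y \sqsubset z$ then $x \trianglelefteq z$; (ii) $\sqsubset$ is well-founded on $V(A)$, i.e., there is no sequence $f$ with $f(i)\in V(A)$ and $f(i+1)\sqsubset f(i)$ for all $i$; (iii) $\sqsubset$ is transitive; (iv) if $x \sqsubset y$ and $y \in V(A)$ then $x \in V(A)$. Let $f:\mathbb{N}\to$ objects and $n\in\mathbb{N}$ be such that $f(n+1)\in V(A)$, $f$ is minimal at $n$, and $f$ is bad w.r.t. $\trianglelefteq$. Then there exists a sequence $g$ such that: $g(i)=f(i)$ for all $i\le n$; $g(n+1)\sqsubseteq f(n+1)$; for every $i\ge n+1$ there is $j\ge n+1$ with $g(i)\sqsubseteq f(j)$; the spliced sequence $f\,[n+1]\,g$ is bad w.r.t. $\trianglelefteq$; and $f\,[n+1]\,g$ is minimal at $n+1$.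
   Context: Sequences are functions $\mathbb{N}\to$ objects. A sequence $h$ is good w.r.t. $\trianglelefteq$ if there are $i<j$ with $h(i)\trianglelefteq h(j)$, and bad otherwise. For sequences $f,g$ and $n\in\mathbb{N}$, the splice $f\,[n]\,g$ is the sequence $j\mapsto g(j)$ if $n\le j$ and $j\mapsto f(j)$ otherwise. A sequence $f$ is minimal at $n$ if for every sequence $g$ such that $g(i)=f(i)$ for all $i<n$, $g(n)\sqsubset f(n)$, and for every $i\ge n$ there exists $j\ge n$ with $g(i)\sqsubseteq f(j)$, the sequence $g$ is good w.r.t. $\trianglelefteq$. *)

theory Defs
  imports Main
begin

definition good :: "('a \<Rightarrow> 'a \<Rightarrow> bool) \<Rightarrow> (nat \<Rightarrow> 'a) \<Rightarrow> bool" where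
  "good P h \<longleftrightarrow> (\<exists>i j. i < j \<and> P (h i) (h j))"

definition bad :: "('a \<Rightarrow> 'a \<Rightarrow> bool) \<Rightarrow> (nat \<Rightarrow> 'a) \<Rightarrow> bool" where
  "bad P h \<longleftrightarrow> \<not> good P h"

definition splice :: "(nat \<Rightarrow> 'a) \<Rightarrow> nat \<Rightarrow> (nat \<Rightarrow> 'a) \<Rightarrow> (nat \<Rightarrow> 'a)" where
  "splice f n g = (\<lambda>j. if n \<le> j then g j else f j)"

definition refl_cl :: "('a \<Rightarrow> 'a \<Rightarrow> bool) \<Rightarrow> 'a \<Rightarrow> 'a \<Rightarrow> bool" where
  "refl_cl S x y \<longleftrightarrow> S x y \<or> x = y"

definition minimal_at ::
  "('a \<Rightarrow> 'a \<Rightarrow> bool) \<Rightarrow> ('a \<Rightarrow> 'a \<Rightarrow> bool) \<Rightarrow> (nat \<Rightarrow> 'a) \<Rightarrow> nat \<Rightarrow> bool" where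
  "minimal_at P S f n \<longleftrightarrow>
     (\<forall>g. (\<forall>i<n. g i = f i) \<and> S (g n) (f n) \<and>
          (\<forall>i\<ge>n. \<exists>j\<ge>n. refl_cl S (g i) (f j)) \<longrightarrow> good P g)"

end

theory Submission
  imports Defs
begin

theorem lemma4:
  fixes V :: "'b set \<Rightarrow> 'a set" and A :: "'b set"
    and P :: "'a \<Rightarrow> 'a \<Rightarrow> bool" and S :: "'a \<Rightarrow> 'a \<Rightarrow> bool"
    and f :: "nat \<Rightarrow> 'a" and n :: nat
  assumes compat: "\<And>x y z. P x y \<Longrightarrow> S y z \<Longrightarrow> P x z"
    and wf: "\<not> (\<exists>h. \<forall>i. h i \<in> V A \<and> S (h (Suc i)) (h i))"
    and trans: "\<And>x y z. S x y \<Longrightarrow> S y z \<Longrightarrow> S x z"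
    and down: "\<And>x y. S x y \<Longrightarrow> y \<in> V A \<Longrightarrow> x \<in> V A"
    and inV: "f (Suc n) \<in> V A"
    and min: "minimal_at P S f n"
    and bad: "bad P f"
  shows "\<exists>g. (\<forall>i\<le>n. g i = f i) \<and> refl_cl S (g (Suc n)) (f (Suc n)) \<and>
             (\<forall>i\<ge>Suc n. \<exists>j\<ge>Suc n. refl_cl S (g i) (f j)) \<and>
             bad P (splice f (Suc n) g) \<and>
             minimal_at P S (splice f (Suc n) g) (Suc n)"
proof -
  define R where "R = {(x,y). S x y \<and> x \<in> V A \<and> y \<in> V A}"
  have wfR: "wf R"
    unfolding wf_iff_no_infinite_down_chain R_def using wf by auto
  define C where "C = {g. (\<forall>i\<le>n. g i = f i) \<and> refl_cl S (g (Suc n)) (f (Suc n)) \<and>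
             (\<forall>i\<ge>Suc n. \<exists>j\<ge>Suc n. refl_cl S (g i) (f j)) \<and>
             bad P (splice f (Suc n) g)}"
  have spl: "splice f (Suc n) g = g" if "\<forall>i\<le>n. g i = f i" for g
    using that by (auto simp: splice_def fun_eq_iff not_le)
  have rt: "refl_cl S x z" if "refl_cl S x y" "refl_cl S y z" for x y z
    using that trans unfolding refl_cl_def by blast
  have fC: "f \<in> C" unfolding C_def using spl bad by (auto simp: refl_cl_def)
  have "f (Suc n) \<in> (\<lambda>h. h (Suc n)) ` C" using fC by blast
  then obtain z where zQ: "z \<in> (\<lambda>h. h (Suc n)) ` C"
    and zmin: "\<And>y. (y,z) \<in> R \<Longrightarrow> y \<notin> (\<lambda>h. h (Suc n)) ` C"
    using wfE_min[OF wfR] by metis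
  then obtain g where gC: "g \<in> C" and gz: "g (Suc n) = z" by blast
  have zV: "z \<in> V A" using gC gz inV down unfolding C_def refl_cl_def by auto
  have gs: "splice f (Suc n) g = g" using gC spl unfolding C_def by blast
  have "minimal_at P S g (Suc n)"
    unfolding minimal_at_def
  proof (intro allI impI)
    fix h assume H: "(\<forall>i<Suc n. h i = g i) \<and> S (h (Suc n)) (g (Suc n)) \<and>
          (\<forall>i\<ge>Suc n. \<exists>j\<ge>Suc n. refl_cl S (h i) (g j))"
    show "good P h"
    proof (rule ccontr)
      assume nb: "\<not> good P h"
      have h1: "\<forall>i\<le>n. h i = f i" using H gC unfolding C_def by auto
      have h2: "refl_cl S (h (Suc n)) (f (Suc n))"
        using H gC rt unfolding C_def refl_cl_def by blast
      have h3: "\<forall>i\<ge>Suc n. \<exists>j\<ge>Suc n. refl_cl S (h i) (f j)"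
      proof (intro allI impI)
        fix i assume "Suc n \<le> i"
        then obtain j where "j \<ge> Suc n" "refl_cl S (h i) (g j)" using H by blast
        moreover then obtain k where "k \<ge> Suc n" "refl_cl S (g j) (f k)"
          using gC unfolding C_def by blast
        ultimately show "\<exists>j\<ge>Suc n. refl_cl S (h i) (f j)" using rt by blast
      qed
      have "h \<in> C" unfolding C_def using h1 h2 h3 spl[OF h1] nb by (simp add: bad_def)
      moreover have "(h (Suc n), z) \<in> R" unfolding R_def using H gz zV down by auto
      ultimately show False using zmin by blast
    qed
  qed
  then show ?thesis using gC gs unfolding C_def by auto
qed

end
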